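(* Let $P$ be a poset and let $2\leq\alpha,\beta\leq\omega$. If $P$ is $(\alpha,\beta)$-representable, then $\exists$ has an $\omega$-strategy in the $(\alpha,\beta)$-game with starting position $(\{p\},\{q\})$ for all $p,q\in P$ with $p\not\leq q$. Moreover, if $P$ is countable, then the converse holds.
   Context: A poset $P$ is $(\alpha,\beta)$-representable if there is a set $X$ and an order embedding $h:P\to\wp(X)$ ($\wp(X)$ ordered by inclusion) such that whenever $S\subseteq P$ with $|S|<\alpha$ and $\bigwedge S$ exists in $P$ then $h(\bigwedge S)=\bigcap h[S]$ (with $\bigcap\emptyset=X$), and whenever $T\subseteq P$ with $|T|<\beta$ and $\bigvee T$ exists in $P$ then $h(\bigvee T)=\bigcup h[T]$. The $(\alpha,\beta)$-game on $P$ with starting position $(U_0,V)$, $U_0,V\subseteq P$, is played between $\forall$ and $\exists$ in rounds $0,1,2,\ldots$; a set $U$ is maintained, initially $U_0$, with $V$ fixed. In each round $\forall$ moves and then $\exists$ responds: (1) if $b\geq a$ for some $a\in U$, $\forall$ may play $(b)$ and $\exists$ must add $b$ to $U$; (2) if $A\subseteq U$ with $|A|<\alpha$ and $\bigwedge A$ exists in $P$, $\forall$ may play $A$ and $\exists$ must add $\bigwedge A$ to $U$; (3) if $B\subseteq P$ with $|B|<\beta$ and $\bigvee B$ exists in $P$ and lies in $U$, $\forall$ may play $B$ and $\exists$ must choose some $b\in B$ and add it to $U$. $\forall$ wins in round $n$ if $U\cap V\neq\emptyset$ at the beginning of round $n$. $\exists$ has an $\omega$-strategy if she can guarantee that $\forall$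 never wins, however he plays. *)

theory Defs
  imports Main "HOL-Library.Extended_Nat" "HOL-Library.Countable_Set"
begin

text \<open>The poset P is the whole carrier of a type of class order.
  Cardinal bounds 2 \<le> alpha, beta \<le> omega are elements of enat, with omega = \<infinity>.\<close>

definition card_lt :: "'x set \<Rightarrow> enat \<Rightarrow> bool" where
  "card_lt S k \<longleftrightarrow> finite S \<and> enat (card S) < k"

definition is_meet :: "'a::order set \<Rightarrow> 'a \<Rightarrow> bool" where
  "is_meet S m \<longleftrightarrow> (\<forall>s\<in>S. m \<le> s) \<and> (\<forall>x. (\<forall>s\<in>S. x \<le> s) \<longrightarrow> x \<le> m)"

definition is_join :: "'a::order set \<Rightarrow> 'a \<Rightarrow> bool" where
  "is_join S m \<longleftrightarrow> (\<forall>s\<in>S. s \<le> m) \<and> (\<forall>x. (\<forall>s\<in>S. s \<le> x) \<longrightarrow> m \<le> x)"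

definition is_representation :: "enat \<Rightarrow> enat \<Rightarrow> 'b set \<Rightarrow> ('a::order \<Rightarrow> 'b set) \<Rightarrow> bool" where
  "is_representation \<alpha> \<beta> X h \<longleftrightarrow>
     (\<forall>p. h p \<subseteq> X) \<and>
     (\<forall>p q. p \<le> q \<longleftrightarrow> h p \<subseteq> h q) \<and>
     (\<forall>S m. card_lt S \<alpha> \<and> is_meet S m \<longrightarrow> h m = X \<inter> \<Inter>(h ` S)) \<and>
     (\<forall>T m. card_lt T \<beta> \<and> is_join T m \<longrightarrow> h m = \<Union>(h ` T))"

datatype 'a move = Up 'a | Meet "'a set" | Join "'a set"

definition legal_move :: "enat \<Rightarrow> enat \<Rightarrow> 'a::order set \<Rightarrow> 'a move \<Rightarrow> bool" where
  "legal_move \<alpha> \<beta> U mv = (case mv of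
      Up b \<Rightarrow> (\<exists>a\<in>U. a \<le> b)
    | Meet A \<Rightarrow> A \<subseteq> U \<and> card_lt A \<alpha> \<and> (\<exists>m. is_meet A m)
    | Join B \<Rightarrow> card_lt B \<beta> \<and> (\<exists>m. is_join B m \<and> m \<in> U))"

text \<open>A strategy for \<exists> maps the history of \<forall>'s moves (current move last) to
  her choice; it is only consulted for join moves.\<close>
type_synonym 'a strategy = "'a move list \<Rightarrow> 'a"

definition response :: "'a::order strategy \<Rightarrow> 'a move list \<Rightarrow> 'a move \<Rightarrow> 'a" where
  "response \<sigma> hist mv = (case mv of
      Up b \<Rightarrow> b
    | Meet A \<Rightarrow> (THE m. is_meet A m)
    | Join B \<Rightarrow> \<sigma> hist)"

fun game_state :: "'a::order set \<Rightarrow> 'a strategy \<Rightarrow> (nat \<Rightarrow> 'a move) \<Rightarrow> nat \<Rightarrow> 'a set" where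
  "game_state U0 \<sigma> ms 0 = U0"
| "game_state U0 \<sigma> ms (Suc n) =
     insert (response \<sigma> (map ms [0..<Suc n]) (ms n)) (game_state U0 \<sigma> ms n)"

definition omega_strategy :: "enat \<Rightarrow> enat \<Rightarrow> 'a::order set \<Rightarrow> 'a set \<Rightarrow> 'a strategy \<Rightarrow> bool" where
  "omega_strategy \<alpha> \<beta> U0 V \<sigma> \<longleftrightarrow>
     (\<forall>ms n. (\<forall>k<n. legal_move \<alpha> \<beta> (game_state U0 \<sigma> ms k) (ms k)) \<longrightarrow>
        game_state U0 \<sigma> ms n \<inter> V = {} \<and>
        (\<forall>k<n. \<forall>B. ms k = Join B \<longrightarrow> \<sigma> (map ms [0..<Suc k]) \<in> B))"

definition exists_has_omega_strategy :: "enat \<Rightarrow> enat \<Rightarrow> 'a::order set \<Rightarrow> 'a set \<Rightarrow> bool" where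
  "exists_has_omega_strategy \<alpha> \<beta> U0 V \<longleftrightarrow> (\<exists>\<sigma>. omega_strategy \<alpha> \<beta> U0 V \<sigma>)"

end

theory Submission
  imports Defs "HOL-Library.Nat_Bijection"
begin

lemma meet_unique: "is_meet A m \<Longrightarrow> is_meet A m' \<Longrightarrow> m = m'"
  unfolding is_meet_def by (meson order_antisym)

lemma the_meet: "is_meet A m \<Longrightarrow> (THE m. is_meet A m) = m"
  using meet_unique by blast

lemma legal_mono: "U \<subseteq> U' \<Longrightarrow> legal_move \<alpha> \<beta> U mv \<Longrightarrow> legal_move \<alpha> \<beta> U' mv"
  unfolding legal_move_def by (cases mv) auto

lemma part1:
  fixes p q :: "'a::order" and h :: "'a \<Rightarrow> 'b set"
  assumes rep: "is_representation \<alpha> \<beta> X h" and npq: "\<not> p \<le> q"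
  shows "exists_has_omega_strategy \<alpha> \<beta> {p} {q}"
proof -
  have sub: "\<And>a. h a \<subseteq> X" and ord: "\<And>a b. a \<le> b \<longleftrightarrow> h a \<subseteq> h b"
    and mt: "\<And>S m. card_lt S \<alpha> \<Longrightarrow> is_meet S m \<Longrightarrow> h m = X \<inter> \<Inter>(h ` S)"
    and jn: "\<And>T m. card_lt T \<beta> \<Longrightarrow> is_join T m \<Longrightarrow> h m = \<Union>(h ` T)"
    using rep unfolding is_representation_def by blast+
  obtain x where xp: "x \<in> h p" and xq: "x \<notin> h q" using npq ord by blast
  have xX: "x \<in> X" using xp sub by blast
  define \<sigma> :: "'a strategy" where "\<sigma> hist = (case last hist of Join B \<Rightarrow> (SOME b. b \<in> B \<and> x \<in> h b) | _ \<Rightarrow> p)" for hist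
  have joinok: "\<sigma> (map ms [0..<Suc k]) \<in> B \<and> x \<in> h (\<sigma> (map ms [0..<Suc k]))"
    if "ms k = Join B" "legal_move \<alpha> \<beta> U (ms k)" "\<forall>u\<in>U. x \<in> h u" for ms k B U
  proof -
    from that obtain m where m: "card_lt B \<beta>" "is_join B m" "m \<in> U"
      unfolding legal_move_def by auto
    then have "x \<in> \<Union>(h ` B)" using jn that(3) by blast
    then have "\<exists>b. b \<in> B \<and> x \<in> h b" by blast
    then have "(SOME b. b \<in> B \<and> x \<in> h b) \<in> B \<and> x \<in> h (SOME b. b \<in> B \<and> x \<in> h b)"
      by (rule someI_ex)
    then show ?thesis unfolding \<sigma>_def using that(1) by simp
  qed
  have inv: "(\<forall>k<n. legal_move \<alpha> \<beta> (game_state {p} \<sigma> ms k) (ms k)) \<longrightarrow> (\<forall>u\<in>game_state {p} \<sigma> ms n. x \<in> h u)" for ms n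
  proof (induction n)
    case 0
    then show ?case using xp by simp
  next
    case (Suc n)
    show ?case
    proof
      assume L: "\<forall>k<Suc n. legal_move \<alpha> \<beta> (game_state {p} \<sigma> ms k) (ms k)"
      then have IH: "\<forall>u\<in>game_state {p} \<sigma> ms n. x \<in> h u" using Suc by simp
      have Ln: "legal_move \<alpha> \<beta> (game_state {p} \<sigma> ms n) (ms n)" using L by simp
      have "x \<in> h (response \<sigma> (map ms [0..<Suc n]) (ms n))"
      proof (cases "ms n")
        case (Up b)
        then show ?thesis using Ln IH ord unfolding legal_move_def response_def by auto
      next
        case (Meet A)
        then obtain m where m: "A \<subseteq> game_state {p} \<sigma> ms n" "card_lt A \<alpha>" "is_meet A m"
          using Ln unfolding legal_move_def by auto
        then have "x \<in> h m" using mt[OF m(2,3)] IH xX by blast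
        then show ?thesis using Meet the_meet[OF m(3)] unfolding response_def by simp
      next
        case (Join B)
        then show ?thesis using joinok[of ms n B, OF Join Ln IH] unfolding response_def by simp
      qed
      then show "\<forall>u\<in>game_state {p} \<sigma> ms (Suc n). x \<in> h u" using IH by simp
    qed
  qed
  have "omega_strategy \<alpha> \<beta> {p} {q} \<sigma>"
    unfolding omega_strategy_def
  proof (intro allI impI, rule conjI)
    fix ms n assume L: "\<forall>k<n. legal_move \<alpha> \<beta> (game_state {p} \<sigma> ms k) (ms k)"
    show "game_state {p} \<sigma> ms n \<inter> {q} = {}" using inv[of n ms] L xq by blast
    show "\<forall>k<n. \<forall>B. ms k = Join B \<longrightarrow> \<sigma> (map ms [0..<Suc k]) \<in> B"
    proof (intro allI impI)
      fix k B assume k: "k < n" "ms k = Join B"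
      have "\<forall>u\<in>game_state {p} \<sigma> ms k. x \<in> h u" using inv[of k ms] L k by auto
      then show "\<sigma> (map ms [0..<Suc k]) \<in> B" using joinok[of ms k B, OF k(2)] L k by blast
    qed
  qed
  then show ?thesis unfolding exists_has_omega_strategy_def by blast
qed

definition prime_filt :: "enat \<Rightarrow> enat \<Rightarrow> 'a::order set \<Rightarrow> bool" where
  "prime_filt \<alpha> \<beta> F \<longleftrightarrow> (\<forall>a b. a \<in> F \<longrightarrow> a \<le> b \<longrightarrow> b \<in> F) \<and>
     (\<forall>A m. A \<subseteq> F \<and> card_lt A \<alpha> \<and> is_meet A m \<longrightarrow> m \<in> F) \<and>
     (\<forall>B m. card_lt B \<beta> \<and> is_join B m \<and> m \<in> F \<longrightarrow> (\<exists>b\<in>B. b \<in> F))"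

lemma rep_from_filters:
  fixes \<alpha> \<beta> :: enat
  assumes sep: "\<And>p q :: 'a::order. \<not> p \<le> q \<Longrightarrow> \<exists>F. prime_filt \<alpha> \<beta> F \<and> p \<in> F \<and> q \<notin> F"
  shows "is_representation \<alpha> \<beta> {F. prime_filt \<alpha> \<beta> F} (\<lambda>a::'a. {F. prime_filt \<alpha> \<beta> F \<and> a \<in> F})"
proof -
  have ordq: "p \<le> q \<longleftrightarrow> {F. prime_filt \<alpha> \<beta> F \<and> p \<in> F} \<subseteq> {F. prime_filt \<alpha> \<beta> F \<and> q \<in> F}" for p q :: 'a
  proof
    assume "p \<le> q" then show "{F. prime_filt \<alpha> \<beta> F \<and> p \<in> F} \<subseteq> {F. prime_filt \<alpha> \<beta> F \<and> q \<in> F}"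
      unfolding prime_filt_def by blast
  next
    assume "{F. prime_filt \<alpha> \<beta> F \<and> p \<in> F} \<subseteq> {F. prime_filt \<alpha> \<beta> F \<and> q \<in> F}"
    then show "p \<le> q" using sep by blast
  qed
  have m: "{F. prime_filt \<alpha> \<beta> F \<and> m \<in> F} = {F. prime_filt \<alpha> \<beta> F} \<inter> \<Inter>((\<lambda>a. {F. prime_filt \<alpha> \<beta> F \<and> a \<in> F}) ` S)"
    if H: "card_lt S \<alpha> \<and> is_meet S m" for S and m :: 'a
  proof (intro set_eqI iffI)
    fix F assume "F \<in> {F. prime_filt \<alpha> \<beta> F \<and> m \<in> F}"
    then have F: "prime_filt \<alpha> \<beta> F" "m \<in> F" by auto
    have "s \<in> F" if "s \<in> S" for s
      using F H that unfolding prime_filt_def is_meet_def by metis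
    then show "F \<in> {F. prime_filt \<alpha> \<beta> F} \<inter> \<Inter>((\<lambda>a. {F. prime_filt \<alpha> \<beta> F \<and> a \<in> F}) ` S)"
      using F by auto
  next
    fix F assume "F \<in> {F. prime_filt \<alpha> \<beta> F} \<inter> \<Inter>((\<lambda>a. {F. prime_filt \<alpha> \<beta> F \<and> a \<in> F}) ` S)"
    then have F: "prime_filt \<alpha> \<beta> F" "S \<subseteq> F" by auto
    then have "m \<in> F" using H unfolding prime_filt_def by blast
    then show "F \<in> {F. prime_filt \<alpha> \<beta> F \<and> m \<in> F}" using F by auto
  qed
  have j: "{F. prime_filt \<alpha> \<beta> F \<and> m \<in> F} = \<Union>((\<lambda>a. {F. prime_filt \<alpha> \<beta> F \<and> a \<in> F}) ` T)"
    if H: "card_lt T \<beta> \<and> is_join T m" for T and m :: 'a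
  proof (intro set_eqI iffI)
    fix F assume "F \<in> {F. prime_filt \<alpha> \<beta> F \<and> m \<in> F}"
    then have F: "prime_filt \<alpha> \<beta> F" "m \<in> F" by auto
    then obtain t where "t \<in> T" "t \<in> F" using H unfolding prime_filt_def by blast
    then show "F \<in> \<Union>((\<lambda>a. {F. prime_filt \<alpha> \<beta> F \<and> a \<in> F}) ` T)" using F by auto
  next
    fix F assume "F \<in> \<Union>((\<lambda>a. {F. prime_filt \<alpha> \<beta> F \<and> a \<in> F}) ` T)"
    then obtain t where F: "prime_filt \<alpha> \<beta> F" "t \<in> F" "t \<in> T" by auto
    then have "t \<le> m" using H unfolding is_join_def by blast
    then have "m \<in> F" using F unfolding prime_filt_def by blast
    then show "F \<in> {F. prime_filt \<alpha> \<beta> F \<and> m \<in> F}" using F by auto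
  qed
  show ?thesis unfolding is_representation_def
    apply (intro conjI allI impI)
       apply blast
        apply (rule ordq)
     apply (erule m)
    apply (erule j)
    done
qed

fun run :: "('a::order) strategy \<Rightarrow> (nat \<Rightarrow> 'a set \<Rightarrow> 'a move) \<Rightarrow> 'a set \<Rightarrow> nat \<Rightarrow> 'a move list \<times> 'a set" where
  "run \<sigma> pk U0 0 = ([], U0)"
| "run \<sigma> pk U0 (Suc n) = (let mv = pk n (snd (run \<sigma> pk U0 n)); hs = fst (run \<sigma> pk U0 n) @ [mv]
     in (hs, insert (response \<sigma> hs mv) (snd (run \<sigma> pk U0 n))))"

lemma run_fst: "fst (run \<sigma> pk U0 n) = map (\<lambda>k. pk k (snd (run \<sigma> pk U0 k))) [0..<n]"
  by (induction n) (auto simp: Let_def)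

lemma run_snd: "snd (run \<sigma> pk U0 n) = game_state U0 \<sigma> (\<lambda>k. pk k (snd (run \<sigma> pk U0 k))) n"
proof (induction n)
  case 0 then show ?case by simp
next
  case (Suc n)
  have "fst (run \<sigma> pk U0 n) @ [pk n (snd (run \<sigma> pk U0 n))] = map (\<lambda>k. pk k (snd (run \<sigma> pk U0 k))) [0..<Suc n]"
    using run_fst by simp
  then show ?case using Suc by (simp add: Let_def)
qed

lemma part2:
  fixes p q :: "'a::order"
  assumes cnt: "countable (UNIV :: 'a set)" and str: "omega_strategy \<alpha> \<beta> {p} {q} \<sigma>"
  shows "\<exists>F. prime_filt \<alpha> \<beta> F \<and> p \<in> F \<and> q \<notin> F"
proof -
  define M :: "'a move set" where "M = range Up \<union> Meet ` {A. finite A} \<union> Join ` {B. finite B}"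
  have cM: "countable M"
  proof -
    have "{A::'a set. finite A} = {A. finite A \<and> A \<subseteq> UNIV}" by simp
    then have "countable {A::'a set. finite A}" using countable_Collect_finite_subset[OF cnt] by simp
    then show ?thesis unfolding M_def using cnt by auto
  qed
  define e where "e = from_nat_into M"
  define pk where "pk n U = (if legal_move \<alpha> \<beta> U (e (fst (prod_decode n))) then e (fst (prod_decode n)) else Up p)" for n U
  define ms where "ms k = pk k (snd (run \<sigma> pk {p} k))" for k
  define U where "U n = game_state {p} \<sigma> ms n" for n
  have msU: "ms k = pk k (U k)" for k unfolding ms_def U_def using run_snd[of \<sigma> pk "{p}" k] by (simp add: ms_def[symmetric])
  have Usuc: "U n \<subseteq> U (Suc n)" for n unfolding U_def by auto
  have Umono: "m \<le> n \<Longrightarrow> U m \<subseteq> U n" for m n using lift_Suc_mono_le[of U, OF Usuc] by blast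
  have pU: "p \<in> U n" for n using Umono[of 0 n] unfolding U_def by auto
  have legal: "legal_move \<alpha> \<beta> (U k) (ms k)" for k
    unfolding msU pk_def using pU[of k] by (auto simp: legal_move_def)
  have disj: "q \<notin> U n" and jb: "\<And>k B. k < n \<Longrightarrow> ms k = Join B \<Longrightarrow> \<sigma> (map ms [0..<Suc k]) \<in> B" for n
    using str legal unfolding omega_strategy_def U_def by blast+
  have key: "\<exists>k. ms k = mv \<and> response \<sigma> (map ms [0..<Suc k]) mv \<in> U (Suc k)"
    if mvH: "mv \<in> M" "legal_move \<alpha> \<beta> (U n) mv" for mv n
  proof -
    obtain i where i: "e i = mv" using from_nat_into_surj[OF cM mvH(1)] e_def by blast
    define k where "k = prod_encode (i, n)"
    have "n \<le> k" unfolding k_def by (rule le_prod_encode_2)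
    then have "legal_move \<alpha> \<beta> (U k) mv" using legal_mono Umono mvH(2) by blast
    then have "ms k = mv" unfolding msU pk_def k_def using i by simp
    then show ?thesis unfolding U_def by auto
  qed
  define F where "F = (\<Union>n. U n)"
  have fin: "finite A \<Longrightarrow> A \<subseteq> F \<Longrightarrow> \<exists>n. A \<subseteq> U n" for A
  proof (induction A rule: finite_induct)
    case empty then show ?case by simp
  next
    case (insert a A)
    then obtain n1 n2 where "a \<in> U n1" "A \<subseteq> U n2" unfolding F_def by blast
    then have "insert a A \<subseteq> U (max n1 n2)" using Umono[of n1 "max n1 n2"] Umono[of n2 "max n1 n2"] by auto
    then show ?case by blast
  qed
  have "prime_filt \<alpha> \<beta> F"
    unfolding prime_filt_def
  proof (intro conjI allI impI)
    fix a b assume "a \<in> F" "a \<le> b"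
    then obtain n where "a \<in> U n" unfolding F_def by blast
    then have "legal_move \<alpha> \<beta> (U n) (Up b)" "Up b \<in> M" using \<open>a \<le> b\<close> unfolding legal_move_def M_def by auto
    from key[OF this(2,1)] show "b \<in> F" unfolding F_def response_def by auto
  next
    fix A m assume H: "A \<subseteq> F \<and> card_lt A \<alpha> \<and> is_meet A m"
    then obtain n where "A \<subseteq> U n" using fin unfolding card_lt_def by blast
    then have "legal_move \<alpha> \<beta> (U n) (Meet A)" "Meet A \<in> M" using H unfolding legal_move_def M_def card_lt_def by auto
    from key[OF this(2,1)] show "m \<in> F" unfolding F_def response_def using the_meet H by auto
  next
    fix B m assume H: "card_lt B \<beta> \<and> is_join B m \<and> m \<in> F"
    then obtain n where "m \<in> U n" unfolding F_def by blast
    then have "legal_move \<alpha> \<beta> (U n) (Join B)" "Join B \<in> M" using H unfolding legal_move_def M_def card_lt_def by auto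
    from key[OF this(2,1)] obtain k where k: "ms k = Join B" "\<sigma> (map ms [0..<Suc k]) \<in> U (Suc k)"
      unfolding response_def by auto
    have "\<sigma> (map ms [0..<Suc k]) \<in> B" using jb[of k "Suc k" B] k by simp
    then show "\<exists>b\<in>B. b \<in> F" using k unfolding F_def by blast
  qed
  moreover have "p \<in> F" using pU unfolding F_def by blast
  moreover have "q \<notin> F" using disj unfolding F_def by blast
  ultimately show ?thesis by blast
qed

theorem proposition5p2:
  fixes \<alpha> \<beta> :: enat
  assumes "2 \<le> \<alpha>" "\<alpha> \<le> \<infinity>" "2 \<le> \<beta>" "\<beta> \<le> \<infinity>"
  shows "(\<forall>(X :: 'b set) (h :: 'a::order \<Rightarrow> 'b set). is_representation \<alpha> \<beta> X h \<longrightarrow>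
            (\<forall>p q :: 'a. \<not> p \<le> q \<longrightarrow> exists_has_omega_strategy \<alpha> \<beta> {p} {q}))
       \<and> (countable (UNIV :: 'a set) \<longrightarrow>
            (\<forall>p q :: 'a. \<not> p \<le> q \<longrightarrow> exists_has_omega_strategy \<alpha> \<beta> {p} {q}) \<longrightarrow>
            (\<exists>(X :: 'a set set) (h :: 'a \<Rightarrow> 'a set set). is_representation \<alpha> \<beta> X h))"
proof (intro conjI allI impI)
  fix X :: "'b set" and h :: "'a \<Rightarrow> 'b set" and p q :: 'a
  assume "is_representation \<alpha> \<beta> X h" "\<not> p \<le> q"
  then show "exists_has_omega_strategy \<alpha> \<beta> {p} {q}" by (rule part1)
next
  assume c: "countable (UNIV :: 'a set)"
    and s: "\<forall>p q :: 'a. \<not> p \<le> q \<longrightarrow> exists_has_omega_strategy \<alpha> \<beta> {p} {q}"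
  have "\<exists>F. prime_filt \<alpha> \<beta> F \<and> p \<in> F \<and> q \<notin> F" if "\<not> p \<le> q" for p q :: 'a
    using s that part2[OF c] unfolding exists_has_omega_strategy_def by blast
  then show "\<exists>(X :: 'a set set) (h :: 'a \<Rightarrow> 'a set set). is_representation \<alpha> \<beta> X h"
    using rep_from_filters by blast
qed

end
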